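(* Let $n\in\mathbb{N}$, $p<1$ and $M\in(0,\frac1n)$. Then there exists $c>0$ such that $$\sum_{i=1}^n\frac{a_i^2+a_ib_i}{|a_i+b_i|^p}\ge c|a|^{2-p}$$ for all $a,b\in\mathbb{R}^n$ satisfying $|b|\le M|a|$.
   Context: $|\cdot|$ is the Euclidean norm. Each summand equals $a_i(a_i+b_i)|a_i+b_i|^{-p}$ and is understood to be $0$ when $a_i+b_i=0$. *)

theory Defs
  imports "HOL-Analysis.Analysis"
begin

end

theory Submission imports Defs "HOL-Analysis.Analysis" begin

lemma term_form:
  fixes x y p :: real
  shows "(x^2 + x*y) / \<bar>x+y\<bar> powr p = x * sgn (x+y) * \<bar>x+y\<bar> powr (1-p)"
proof (cases "x+y = 0")
  case True then show ?thesis by simp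
next
  case False
  have "\<bar>x+y\<bar> powr (1-p) = \<bar>x+y\<bar> / \<bar>x+y\<bar> powr p"
    using False by (simp add: powr_diff)
  moreover have "x^2 + x*y = x * sgn (x+y) * \<bar>x+y\<bar>"
  proof -
    have "x^2 + x*y = x*(x+y)" by (simp add: power2_eq_square algebra_simps)
    also have "\<dots> = x * (sgn (x+y) * \<bar>x+y\<bar>)" by (simp add: sgn_mult_abs)
    finally show ?thesis by (simp add: mult.assoc)
  qed
  ultimately show ?thesis by simp
qed

lemma term_nonneg:
  fixes x y p :: real
  assumes "\<bar>y\<bar> \<le> \<bar>x\<bar>"
  shows "0 \<le> (x^2 + x*y) / \<bar>x+y\<bar> powr p"
proof -
  have "0 \<le> x * sgn (x+y)"
    using assms by (cases "x > 0"; cases "x+y > 0"; cases "x + y = 0"; auto simp: sgn_if)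
  then show ?thesis unfolding term_form by simp
qed

lemma term_pos:
  fixes x y p :: real
  assumes "\<bar>y\<bar> < \<bar>x\<bar>" "p < 1"
  shows "\<bar>x\<bar> * (\<bar>x\<bar> - \<bar>y\<bar>) powr (1-p) \<le> (x^2 + x*y) / \<bar>x+y\<bar> powr p"
proof -
  have "x * sgn (x+y) = \<bar>x\<bar>"
    using assms by (cases "x > 0"; cases "x+y > 0"; cases "x + y = 0"; auto simp: sgn_if)
  moreover have "(\<bar>x\<bar> - \<bar>y\<bar>) powr (1-p) \<le> \<bar>x+y\<bar> powr (1-p)"
    using assms by (intro powr_mono2) auto
  ultimately show ?thesis unfolding term_form
    by (simp add: mult_left_mono)
qed

lemma term_gen:
  fixes x y p :: real
  assumes "p < 1"
  shows "-(\<bar>x\<bar> * \<bar>y\<bar> powr (1-p)) \<le> (x^2 + x*y) / \<bar>x+y\<bar> powr p"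
proof (cases "0 \<le> x * sgn (x+y)")
  case True
  then have "0 \<le> x * sgn (x+y) * \<bar>x+y\<bar> powr (1-p)" by simp
  moreover have "-(\<bar>x\<bar> * \<bar>y\<bar> powr (1-p)) \<le> 0" by simp
  ultimately show ?thesis unfolding term_form by linarith
next
  case False
  then have s: "x * sgn (x+y) = - \<bar>x\<bar>" and le: "\<bar>x+y\<bar> \<le> \<bar>y\<bar>"
    by (cases "x > 0"; cases "x+y > 0"; cases "x + y = 0"; auto simp: sgn_if)+
  have "\<bar>x+y\<bar> powr (1-p) \<le> \<bar>y\<bar> powr (1-p)"
    using assms le by (intro powr_mono2) auto
  then show ?thesis unfolding term_form s
    by (simp add: mult_left_mono)
qed

lemma nsq: "(norm (x::real^'n))^2 = (\<Sum>i\<in>UNIV. (x$i)^2)"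
  unfolding power2_norm_eq_inner inner_vec_def by (simp add: power2_eq_square)

theorem lemma12:
  fixes p M :: real
  assumes "p < 1" and "0 < M" and "M < 1 / real CARD('n::finite)"
  shows "\<exists>c>0. \<forall>a b :: real ^ 'n. norm b \<le> M * norm a \<longrightarrow>
           (\<Sum>i\<in>UNIV. ((a $ i)^2 + a $ i * b $ i) / \<bar>a $ i + b $ i\<bar> powr p)
             \<ge> c * norm a powr (2 - p)"
proof -
  define n where "n = real CARD('n)"
  define r where "r = 1 - p"
  have r: "r > 0" using assms(1) by (simp add: r_def)
  have n1: "n \<ge> 1" unfolding n_def by (simp add: Suc_le_eq)
  have Mn: "M * n < 1" using assms(3) n1 by (simp add: n_def field_simps)
  have sqn: "sqrt n * sqrt n = n" using n1 by simp
  define e1 where "e1 = 1 / sqrt n - M"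
  define e2 where "e2 = 1 / sqrt n - sqrt n * M"
  have e2: "e2 > 0"
  proof -
    have "sqrt n * M * sqrt n < 1" using Mn sqn by (simp add: mult.commute mult.left_commute)
    then have "sqrt n * M < 1 / sqrt n" using n1 by (simp add: field_simps)
    then show ?thesis by (simp add: e2_def)
  qed
  have e12: "e2 \<le> e1" using n1 assms(2) unfolding e1_def e2_def
    by (simp add: mult_right_mono)
  define c where "c = e1 powr r * e2"
  have c: "c > 0" using e2 e12 by (simp add: c_def)
  show ?thesis
  proof (intro exI[of _ c] conjI allI impI c)
    fix a b :: "real ^ 'n"
    assume bM: "norm b \<le> M * norm a"
    define f where "f i = ((a $ i)^2 + a $ i * b $ i) / \<bar>a $ i + b $ i\<bar> powr p" for i
    show "(\<Sum>i\<in>UNIV. ((a $ i)^2 + a $ i * b $ i) / \<bar>a $ i + b $ i\<bar> powr p)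
             \<ge> c * norm a powr (2 - p)"
    proof (cases "a = 0")
      case True
      then have "b = 0" using bM by simp
      then show ?thesis using True by simp
    next
      case False
      then have na: "norm a > 0" by simp
      obtain k where k: "\<And>i. \<bar>a $ i\<bar> \<le> \<bar>a $ k\<bar>"
      proof -
        define m where "m = Max ((\<lambda>i. \<bar>a $ i\<bar>) ` UNIV)"
        have "m \<in> (\<lambda>i. \<bar>a $ i\<bar>) ` UNIV" unfolding m_def by (intro Max_in) auto
        then obtain k where "m = \<bar>a $ k\<bar>" by blast
        moreover have "\<bar>a $ i\<bar> \<le> m" for i unfolding m_def by (intro Max_ge) auto
        ultimately show ?thesis using that by metis
      qed
      define A where "A = \<bar>a $ k\<bar>"
      have nA2: "(norm a)^2 \<le> n * A^2"
      proof -
        have "(norm a)^2 = (\<Sum>i\<in>UNIV. (a$i)^2)" by (rule nsq)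
        also have "\<dots> \<le> (\<Sum>i\<in>(UNIV::'n set). A^2)"
        proof (rule sum_mono)
          fix i show "(a$i)^2 \<le> A^2" unfolding A_def using k[of i]
            by (simp add: abs_le_square_iff[symmetric] del: abs_le_square_iff)
        qed
        finally show ?thesis by (simp add: n_def)
      qed
      have Alow: "norm a / sqrt n \<le> A"
      proof -
        have "(norm a / sqrt n)^2 \<le> A^2" using nA2 n1
          by (simp add: power_divide field_simps)
        then show ?thesis using A_def n1 by (simp add: abs_le_square_iff[symmetric] del: abs_le_square_iff)
      qed
      have bk: "\<bar>b $ k\<bar> \<le> M * norm a" using component_le_norm_cart[of b k] bM by linarith
      define D where "D = A - \<bar>b $ k\<bar>"
      have De1: "norm a * e1 \<le> D" using Alow bk unfolding D_def e1_def
        by (simp add: field_simps)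
      have e1: "e1 > 0" using e12 e2 by linarith
      have Dpos: "D > 0" using De1 e1 na by (smt (verit) mult_pos_pos)
      have bi: "\<bar>b $ i\<bar> \<le> D" if "i \<noteq> k" for i
      proof -
        have card2: "n \<ge> 2"
        proof -
          have "card {i, k} \<le> CARD('n)" by (rule card_mono) auto
          then show ?thesis using that by (simp add: n_def)
        qed
        have "(\<bar>b $ i\<bar> + \<bar>b $ k\<bar>)^2 \<le> 2 * ((b$i)^2 + (b$k)^2)"
        proof -
          have "0 \<le> (\<bar>b$i\<bar> - \<bar>b$k\<bar>)^2" by simp
          then have "(\<bar>b $ i\<bar> + \<bar>b $ k\<bar>)^2 \<le> 2 * (\<bar>b$i\<bar>^2 + \<bar>b$k\<bar>^2)"
            by (simp add: power2_eq_square algebra_simps)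
          then show ?thesis by simp
        qed
        also have "(b$i)^2 + (b$k)^2 = (\<Sum>j\<in>{i,k}. (b$j)^2)" using that by simp
        also have "2 * \<dots> \<le> 2 * (\<Sum>j\<in>UNIV. (b$j)^2)" by (simp add: sum_mono2)
        also have "(\<Sum>j\<in>UNIV. (b$j)^2) = (norm b)^2" by (rule nsq[symmetric])
        also have "2 * \<dots> \<le> 2 * (M * norm a)^2"
          using bM by (simp add: power_mono)
        also have "\<dots> \<le> (norm a)^2 / n"
        proof -
          have mn: "(M*n)^2 \<le> 1" using Mn assms(2) n1
            by (metis less_eq_real_def mult_nonneg_nonneg one_power2 power_mono zero_le_one order.trans less_imp_le)
          have "2 * M^2 * n * n \<le> n"
          proof -
            have "2 * M^2 * n * n = 2 * (M*n)^2" by (simp add: power2_eq_square)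
            also have "\<dots> \<le> 2" using mn by simp
            finally show ?thesis using card2 by linarith
          qed
          then have m2: "2 * M^2 * n \<le> 1" using n1 by (simp add: mult.assoc)
          have "2 * (M * norm a)^2 * n \<le> (norm a)^2"
            using mult_right_mono[OF m2, of "(norm a)^2"] by (simp add: power_mult_distrib algebra_simps)
          then show ?thesis using n1 by (simp add: field_simps)
        qed
        also have "\<dots> \<le> A^2" using nA2 n1 by (simp add: field_simps)
        finally have "(\<bar>b $ i\<bar> + \<bar>b $ k\<bar>)^2 \<le> A^2" .
        then have "\<bar>b $ i\<bar> + \<bar>b $ k\<bar> \<le> A"
          by (rule power2_le_imp_le) (simp add: A_def)
        then show ?thesis by (simp add: D_def)
      qed
      define N where "N = {i \<in> UNIV - {k}. \<bar>a $ i\<bar> < \<bar>b $ i\<bar>}"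
      define S where "S = (\<Sum>i\<in>N. \<bar>a $ i\<bar>)"
      have fk: "A * D powr r \<le> f k"
      proof -
        have "\<bar>b $ k\<bar> < A" using Dpos D_def by simp
        then show ?thesis unfolding f_def A_def D_def r_def
          using term_pos[of "b$k" "a$k" p] assms(1) by simp
      qed
      have fi: "- (D powr r * (if \<bar>a $ i\<bar> < \<bar>b $ i\<bar> then \<bar>a $ i\<bar> else 0)) \<le> f i"
        if "i \<noteq> k" for i
      proof (cases "\<bar>a $ i\<bar> < \<bar>b $ i\<bar>")
        case True
        have "\<bar>b $ i\<bar> powr r \<le> D powr r" using bi[OF that] r by (intro powr_mono2) auto
        then have "\<bar>a $ i\<bar> * \<bar>b $ i\<bar> powr r \<le> \<bar>a $ i\<bar> * D powr r"
          by (simp add: mult_left_mono)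
        then show ?thesis using True term_gen[of p "a$i" "b$i"] assms(1)
          unfolding f_def r_def by (simp add: mult.commute)
      next
        case False
        then show ?thesis unfolding f_def using term_nonneg[of "b$i" "a$i" p] by simp
      qed
      have sum1: "(\<Sum>i\<in>UNIV. f i) = f k + (\<Sum>i\<in>UNIV-{k}. f i)"
        by (simp add: sum.remove)
      have "(\<Sum>i\<in>UNIV-{k}. - (D powr r * (if \<bar>a $ i\<bar> < \<bar>b $ i\<bar> then \<bar>a $ i\<bar> else 0)))
             \<le> (\<Sum>i\<in>UNIV-{k}. f i)" by (intro sum_mono fi) auto
      moreover have "(\<Sum>i\<in>UNIV-{k}. - (D powr r * (if \<bar>a $ i\<bar> < \<bar>b $ i\<bar> then \<bar>a $ i\<bar> else 0)))
             = - (D powr r * S)"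
      proof -
        have "S = (\<Sum>i\<in>UNIV-{k}. if \<bar>a $ i\<bar> < \<bar>b $ i\<bar> then \<bar>a $ i\<bar> else 0)"
          unfolding S_def N_def by (rule sum.inter_filter) simp
        then show ?thesis by (simp add: sum_negf sum_distrib_left[symmetric])
      qed
      ultimately have main: "D powr r * (A - S) \<le> (\<Sum>i\<in>UNIV. f i)"
        using sum1 fk by (simp add: algebra_simps)
      have Sle: "S \<le> norm a * (sqrt n * M)"
      proof -
        have "S^2 \<le> (\<Sum>i\<in>N. (a$i)^2) * card N" unfolding S_def
          using sum_squared_le_sum_of_squares[of "\<lambda>i. \<bar>a$i\<bar>" N] by simp
        also have "\<dots> \<le> (\<Sum>i\<in>N. (b$i)^2) * n"
        proof (rule mult_mono)
          show "(\<Sum>i\<in>N. (a$i)^2) \<le> (\<Sum>i\<in>N. (b$i)^2)"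
            by (intro sum_mono) (simp add: N_def abs_le_square_iff[symmetric] del: abs_le_square_iff)
          show "real (card N) \<le> n" unfolding n_def by (simp add: card_mono)
        qed (auto simp: sum_nonneg)
        also have "\<dots> \<le> (norm b)^2 * n"
          unfolding nsq using n1 by (intro mult_right_mono sum_mono2) auto
        also have "\<dots> \<le> (M * norm a)^2 * n"
          using bM n1 by (intro mult_right_mono power_mono) auto
        also have "\<dots> = (norm a * (sqrt n * M))^2"
          using n1 by (simp add: power_mult_distrib)
        finally show ?thesis
          by (rule power2_le_imp_le) (use assms(2) na n1 in simp)
      qed
      have AS: "norm a * e2 \<le> A - S" using Alow Sle unfolding e2_def
        by (simp add: field_simps)
      have pw: "norm a powr (2 - p) = norm a * norm a powr (1 - p)"
        using na powr_add[of "norm a" 1 "1-p"] by simp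
      have "c * norm a powr (2 - p) = (norm a * e1) powr r * (norm a * e2)"
        using na e1 unfolding c_def r_def
        by (simp add: powr_mult pw field_simps)
      also have "\<dots> \<le> D powr r * (A - S)"
        using De1 AS e1 e2 na r by (intro mult_mono powr_mono2) auto
      also have "\<dots> \<le> (\<Sum>i\<in>UNIV. f i)" by (rule main)
      finally show ?thesis unfolding f_def by simp
    qed
  qed
qed

end
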